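(* Let $n\geq7$ and let $u,v\in G(J(P_{n-5}))$. If $uv\in G(J(P_{n-5})^2)$, then $(x_{n-1}x_{n-2}x_{n-4}u)(x_nx_{n-2}x_{n-4}v)\in G(J(P_n)^2)$.
   Context: For $m\geq1$, $P_m$ is the path graph on vertices $x_1,\ldots,x_m$ with edges $\{x_i,x_{i+1}\}$; $J(P_m)$ is its cover ideal in a polynomial ring over a field, generated by the monomials $\prod_{x\in C}x$ with $C$ a minimal vertex cover of $P_m$; $G(I)$ denotes the set of minimal monomial generators of a monomial ideal $I$. *)

theory Defs
  imports "HOL-Library.Multiset"
begin

text \<open>Monomials in the variables x_1, x_2, ... are represented by their exponent
multisets: the monomial x_{i1} x_{i2} ... x_{ik} is the multiset {#i1,...,ik#}.
Multiplication is multiset sum, divisibility is multiset inclusion.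
A monomial ideal is represented by the set of monomials it contains.\<close>

type_synonym monomial = "nat multiset"

definition path_vertex_cover :: "nat \<Rightarrow> nat set \<Rightarrow> bool" where
  "path_vertex_cover m C \<longleftrightarrow> C \<subseteq> {1..m} \<and>
     (\<forall>i. 1 \<le> i \<and> i < m \<longrightarrow> i \<in> C \<or> Suc i \<in> C)"

definition path_min_vertex_cover :: "nat \<Rightarrow> nat set \<Rightarrow> bool" where
  "path_min_vertex_cover m C \<longleftrightarrow> path_vertex_cover m C \<and>
     (\<forall>D. D \<subset> C \<longrightarrow> \<not> path_vertex_cover m D)"

definition mono_ideal :: "monomial set \<Rightarrow> monomial set" where
  "mono_ideal S = {w. \<exists>s\<in>S. s \<subseteq># w}"

definition mono_prod :: "monomial set \<Rightarrow> monomial set \<Rightarrow> monomial set" where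
  "mono_prod I J = {w. \<exists>a\<in>I. \<exists>b\<in>J. a + b \<subseteq># w}"

definition cover_ideal_path :: "nat \<Rightarrow> monomial set" where
  "cover_ideal_path m = mono_ideal {mset_set C | C. path_min_vertex_cover m C}"

definition min_gens :: "monomial set \<Rightarrow> monomial set" where
  "min_gens I = {w \<in> I. \<forall>w'\<in>I. w' \<subseteq># w \<longrightarrow> w' = w}"

end

theory Submission
  imports Defs
begin

lemma cover_fin: "path_vertex_cover m C \<Longrightarrow> finite C"
  unfolding path_vertex_cover_def by (meson finite_atLeastAtMost finite_subset)

lemma cover_has_min:
  assumes "path_vertex_cover m C"
  shows "\<exists>D\<subseteq>C. path_min_vertex_cover m D"
proof -
  let ?S = "{D. D \<subseteq> C \<and> path_vertex_cover m D}"
  have ne: "C \<in> ?S" using assms by auto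
  have "\<exists>D. D \<in> ?S \<and> (\<forall>E. E \<in> ?S \<longrightarrow> card D \<le> card E)"
    using ex_has_least_nat[of "\<lambda>D. D \<in> ?S" C card] ne by blast
  then obtain D where D: "D \<in> ?S" "\<forall>E. E \<in> ?S \<longrightarrow> card D \<le> card E" by blast
  have fC: "finite C" using cover_fin assms by blast
  have "path_min_vertex_cover m D"
    unfolding path_min_vertex_cover_def
  proof (intro conjI allI impI)
    show "path_vertex_cover m D" using D by auto
  next
    fix E assume "E \<subset> D"
    have DC: "D \<subseteq> C" using D(1) by simp
    have fD: "finite D" using DC fC finite_subset by blast
    have "card E < card D" using psubset_card_mono[OF fD \<open>E \<subset> D\<close>] .
    have "E \<subseteq> C" using \<open>E \<subset> D\<close> DC by blast
    show "\<not> path_vertex_cover m E"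
    proof
      assume "path_vertex_cover m E"
      then have "E \<in> ?S" using \<open>E \<subseteq> C\<close> by simp
      then have "card D \<le> card E" using D(2) by blast
      then show False using \<open>card E < card D\<close> by simp
    qed
  qed
  then show ?thesis using D by auto
qed

lemma cover_in_J:
  assumes "path_vertex_cover m C"
  shows "mset_set C \<in> cover_ideal_path m"
proof -
  obtain D where "D \<subseteq> C" "path_min_vertex_cover m D" using cover_has_min assms by blast
  moreover have "mset_set D \<subseteq># mset_set C"
    using calculation assms cover_fin subset_imp_msubset_mset_set by blast
  ultimately show ?thesis unfolding cover_ideal_path_def mono_ideal_def by blast
qed

lemma mingen_J:
  assumes "u \<in> min_gens (cover_ideal_path m)"
  shows "\<exists>C. path_vertex_cover m C \<and> u = mset_set C"
proof -
  from assms have u: "u \<in> cover_ideal_path m" and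
    mn: "\<forall>w'\<in>cover_ideal_path m. w' \<subseteq># u \<longrightarrow> w' = u"
    unfolding min_gens_def by auto
  from u obtain C where C: "path_min_vertex_cover m C" "mset_set C \<subseteq># u"
    unfolding cover_ideal_path_def mono_ideal_def by blast
  have "path_vertex_cover m C" using C path_min_vertex_cover_def by blast
  then have "mset_set C \<in> cover_ideal_path m" using cover_in_J by blast
  then show ?thesis using mn C \<open>path_vertex_cover m C\<close> by metis
qed

lemma restrict_cover:
  assumes "path_vertex_cover n C" "m \<le> n"
  shows "path_vertex_cover m (C \<inter> {1..m})"
  using assms unfolding path_vertex_cover_def
  by (metis (no_types, lifting) IntI Suc_leI atLeastAtMost_iff inf_le2 le_Suc_eq
      less_imp_le_nat order.strict_trans2)

lemma top_cover:
  assumes "path_vertex_cover n C" "n \<ge> 7"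
  shows "(n - 3 \<notin> C \<longrightarrow> n - 4 \<in> C \<and> n - 2 \<in> C) \<and> (n - 1 \<in> C \<or> n \<in> C)"
proof -
  have h: "\<And>i. 1 \<le> i \<Longrightarrow> i < n \<Longrightarrow> i \<in> C \<or> Suc i \<in> C"
    using assms(1) unfolding path_vertex_cover_def by auto
  have "n - 4 \<in> C \<or> Suc (n - 4) \<in> C" using h[of "n - 4"] assms(2) by auto
  moreover have "n - 3 \<in> C \<or> Suc (n - 3) \<in> C" using h[of "n - 3"] assms(2) by auto
  moreover have "n - 1 \<in> C \<or> Suc (n - 1) \<in> C" using h[of "n - 1"] assms(2) by auto
  moreover have "Suc (n - 4) = n - 3" "Suc (n - 3) = n - 2" "Suc (n - 1) = n" using assms(2) by auto
  ultimately show ?thesis by auto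
qed

theorem lemma3p14:
  fixes n :: nat and u v :: monomial
  assumes "n \<ge> 7"
    and "u \<in> min_gens (cover_ideal_path (n - 5))"
    and "v \<in> min_gens (cover_ideal_path (n - 5))"
    and "u + v \<in> min_gens (mono_prod (cover_ideal_path (n - 5)) (cover_ideal_path (n - 5)))"
  shows "({#n - 1, n - 2, n - 4#} + u) + ({#n, n - 2, n - 4#} + v)
           \<in> min_gens (mono_prod (cover_ideal_path n) (cover_ideal_path n))"
proof -
  define m where "m = n - 5"
  define w where "w = ({#n - 1, n - 2, n - 4#} + u) + ({#n, n - 2, n - 4#} + v)"
  obtain Cu where Cu: "path_vertex_cover m Cu" "u = mset_set Cu"
    using mingen_J assms(2) m_def by blast
  obtain Cv where Cv: "path_vertex_cover m Cv" "v = mset_set Cv"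
    using mingen_J assms(3) m_def by blast
  have fu: "finite Cu" "finite Cv" using Cu Cv cover_fin by auto
  have Cus: "Cu \<subseteq> {1..m}" "Cv \<subseteq> {1..m}" using Cu Cv path_vertex_cover_def by auto
  have cu0: "count u x = 0" "count v x = 0" if "x \<notin> {1..m}" for x
  proof -
    have "x \<notin> Cu" "x \<notin> Cv" using Cus that by auto
    then show "count u x = 0" "count v x = 0" using Cu Cv by auto
  qed
  have cw: "count w x = count u x + count v x + (if x = n - 1 then 1 else 0) + (if x = n then 1 else 0)
      + (if x = n - 2 then 2 else 0) + (if x = n - 4 then 2 else 0)" for x
    unfolding w_def using assms(1) by auto
  have uv: "u + v \<in> mono_prod (cover_ideal_path m) (cover_ideal_path m)"
    and uvmin: "\<forall>w'\<in>mono_prod (cover_ideal_path m) (cover_ideal_path m). w' \<subseteq># u + v \<longrightarrow> w' = u + v"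
    using assms(4) unfolding min_gens_def m_def by auto
  define A where "A = Cu \<union> {n - 4, n - 2, n - 1}"
  define B where "B = Cv \<union> {n - 4, n - 2, n}"
  have Acov: "path_vertex_cover n A"
    unfolding path_vertex_cover_def
  proof (intro conjI allI impI)
    have "{1..m} \<subseteq> {1..n}" unfolding m_def by auto
    then have "Cu \<subseteq> {1..n}" using Cus by blast
    then show "A \<subseteq> {1..n}" using assms(1) unfolding A_def by auto
  next
    fix i assume i: "1 \<le> i \<and> i < n"
    show "i \<in> A \<or> Suc i \<in> A"
    proof (cases "i < m")
      case True
      then have "i \<in> Cu \<or> Suc i \<in> Cu" using Cu(1) i unfolding path_vertex_cover_def by auto
      then show ?thesis unfolding A_def by auto
    next
      case False
      then have "i = n - 5 \<or> i = n - 4 \<or> i = n - 3 \<or> i = n - 2 \<or> i = n - 1"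
        using i assms(1) m_def by auto
      then show ?thesis unfolding A_def using assms(1) by auto
    qed
  qed
  have Bcov: "path_vertex_cover n B"
    unfolding path_vertex_cover_def
  proof (intro conjI allI impI)
    have "{1..m} \<subseteq> {1..n}" unfolding m_def by auto
    then have "Cv \<subseteq> {1..n}" using Cus by blast
    then show "B \<subseteq> {1..n}" using assms(1) unfolding B_def by auto
  next
    fix i assume i: "1 \<le> i \<and> i < n"
    show "i \<in> B \<or> Suc i \<in> B"
    proof (cases "i < m")
      case True
      then have "i \<in> Cv \<or> Suc i \<in> Cv" using Cv(1) i unfolding path_vertex_cover_def by auto
      then show ?thesis unfolding B_def by auto
    next
      case False
      then have "i = n - 5 \<or> i = n - 4 \<or> i = n - 3 \<or> i = n - 2 \<or> i = n - 1"
        using i assms(1) m_def by auto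
      then show ?thesis unfolding B_def using assms(1) by auto
    qed
  qed
  have Aeq: "mset_set A = {#n - 1, n - 2, n - 4#} + u"
  proof (rule multiset_eqI)
    fix x show "count (mset_set A) x = count ({#n - 1, n - 2, n - 4#} + u) x"
    proof (cases "x \<in> {1..m}")
      case True
      then have "x \<noteq> n - 1" "x \<noteq> n" "x \<noteq> n - 2" "x \<noteq> n - 4" using m_def assms(1) by auto
      then show ?thesis using True fu Cu(2) unfolding A_def by (auto simp: count_mset_set')
    next
      case False
      then have "x \<notin> Cu" using Cus by blast
      then show ?thesis using False fu Cu(2) cu0[OF False] assms(1) unfolding A_def by (auto simp: count_mset_set')
    qed
  qed
  have Beq: "mset_set B = {#n, n - 2, n - 4#} + v"
  proof (rule multiset_eqI)
    fix x show "count (mset_set B) x = count ({#n, n - 2, n - 4#} + v) x"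
    proof (cases "x \<in> {1..m}")
      case True
      then have "x \<noteq> n - 1" "x \<noteq> n" "x \<noteq> n - 2" "x \<noteq> n - 4" using m_def assms(1) by auto
      then show ?thesis using True fu Cv(2) unfolding B_def by (auto simp: count_mset_set')
    next
      case False
      then have "x \<notin> Cv" using Cus by blast
      then show ?thesis using False fu Cv(2) cu0[OF False] assms(1) unfolding B_def by (auto simp: count_mset_set')
    qed
  qed
  have win: "w \<in> mono_prod (cover_ideal_path n) (cover_ideal_path n)"
  proof -
    have "mset_set A + mset_set B \<subseteq># w" unfolding w_def Aeq Beq by simp
    then show ?thesis unfolding mono_prod_def using cover_in_J[OF Acov] cover_in_J[OF Bcov] by blast
  qed
  have key: "mset_set C1 + mset_set C2 = w"
    if C1: "path_vertex_cover n C1" and C2: "path_vertex_cover n C2"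
      and sub: "mset_set C1 + mset_set C2 \<subseteq># w" for C1 C2
  proof -
    have f: "finite C1" "finite C2" using C1 C2 cover_fin by auto
    have C1s: "C1 \<subseteq> {1..n}" "C2 \<subseteq> {1..n}" using C1 C2 path_vertex_cover_def by auto
    have cs: "(if x \<in> C1 then 1 else 0) + (if x \<in> C2 then 1 else 0) \<le> count w x" for x
    proof -
      have h3: "count (mset_set C1 + mset_set C2) x \<le> count w x" using sub by (rule mset_subset_eq_count)
      have h1: "count (mset_set C1) x = (if x \<in> C1 then 1 else 0)" using f by (simp add: count_mset_set')
      have h2: "count (mset_set C2) x = (if x \<in> C2 then 1 else 0)" using f by (simp add: count_mset_set')
      show ?thesis using h3 by (simp only: count_union h1 h2)
    qed
    define r where "r = mset_set (C1 \<inter> {1..m}) + mset_set (C2 \<inter> {1..m})"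
    have rin: "r \<in> mono_prod (cover_ideal_path m) (cover_ideal_path m)"
    proof -
      have mn: "m \<le> n" unfolding m_def by simp
      have "mset_set (C1 \<inter> {1..m}) \<in> cover_ideal_path m" using cover_in_J[OF restrict_cover[OF C1 mn]] .
      moreover have "mset_set (C2 \<inter> {1..m}) \<in> cover_ideal_path m" using cover_in_J[OF restrict_cover[OF C2 mn]] .
      ultimately show ?thesis unfolding r_def mono_prod_def by (blast intro: subset_mset.order_refl)
    qed
    have rsub: "r \<subseteq># u + v"
    proof (rule mset_subset_eqI)
      fix x
      show "count r x \<le> count (u + v) x"
      proof (cases "x \<in> {1..m}")
        case True
        then have "x \<noteq> n - 1" "x \<noteq> n" "x \<noteq> n - 2" "x \<noteq> n - 4" using m_def assms(1) by auto
        then show ?thesis using cs[of x] cw[of x] True f unfolding r_def by (auto simp: count_mset_set')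
      next
        case False
        then show ?thesis unfolding r_def using f by (auto simp: count_mset_set')
      qed
    qed
    have req: "r = u + v" using uvmin rin rsub by blast
    have n3: "n - 3 \<notin> C1" "n - 3 \<notin> C2"
    proof -
      have nm: "n - 3 \<notin> {1..m}" using m_def assms(1) by auto
      have "n - 3 \<noteq> n - 1" "n - 3 \<noteq> n" "n - 3 \<noteq> n - 2" "n - 3 \<noteq> n - 4" using assms(1) by auto
      then have "count w (n - 3) = 0" using cw[of "n - 3"] cu0[OF nm] by simp
      then show "n - 3 \<notin> C1" "n - 3 \<notin> C2" using cs[of "n - 3"] by (auto split: if_splits)
    qed
    have t1: "n - 4 \<in> C1" "n - 2 \<in> C1" "n - 1 \<in> C1 \<or> n \<in> C1"
      using top_cover[OF C1 assms(1)] n3 by auto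
    have t2: "n - 4 \<in> C2" "n - 2 \<in> C2" "n - 1 \<in> C2 \<or> n \<in> C2"
      using top_cover[OF C2 assms(1)] n3 by auto
    have ca: "count w (n - 1) = 1" "count w n = 1"
    proof -
      have nm: "n - 1 \<notin> {1..m}" "n \<notin> {1..m}" using m_def assms(1) by auto
      have "n - 1 \<noteq> n" "n - 1 \<noteq> n - 2" "n - 1 \<noteq> n - 4" "n \<noteq> n - 2" "n \<noteq> n - 4" using assms(1) by auto
      then show "count w (n - 1) = 1" "count w n = 1" using cw[of "n - 1"] cw[of n] cu0[OF nm(1)] cu0[OF nm(2)] by auto
    qed
    show ?thesis
    proof (rule multiset_eqI)
      fix x
      show "count (mset_set C1 + mset_set C2) x = count w x"
      proof (cases "x \<in> {1..m}")
        case True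
        then have "x \<noteq> n - 1" "x \<noteq> n" "x \<noteq> n - 2" "x \<noteq> n - 4" using m_def assms(1) by auto
        moreover have "count r x = count (u + v) x" using req by simp
        ultimately show ?thesis using cw[of x] True f unfolding r_def by (auto simp: count_mset_set')
      next
        case False
        note z = cu0[OF False]
        consider "x = n - 4" | "x = n - 2" | "x = n - 1" | "x = n" | "x \<noteq> n - 4 \<and> x \<noteq> n - 2 \<and> x \<noteq> n - 1 \<and> x \<noteq> n"
          by blast
        then show ?thesis
        proof cases
          case 1 then show ?thesis using cw[of x] z t1 t2 f assms(1) by auto
        next
          case 2 then show ?thesis using cw[of x] z t1 t2 f assms(1) by auto
        next
          case 3 then show ?thesis using cs[of "n - 1"] cs[of n] ca t1 t2 f by (auto split: if_splits)
        next
          case 4 then show ?thesis using cs[of "n - 1"] cs[of n] ca t1 t2 f by (auto split: if_splits)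
        next
          case 5 then show ?thesis using cw[of x] cs[of x] z f by (auto split: if_splits)
        qed
      qed
    qed
  qed
  show ?thesis
    unfolding w_def[symmetric] min_gens_def
  proof (intro CollectI conjI ballI impI win)
    fix w' assume w': "w' \<in> mono_prod (cover_ideal_path n) (cover_ideal_path n)" and le: "w' \<subseteq># w"
    obtain a b where ab: "a \<in> cover_ideal_path n" "b \<in> cover_ideal_path n" "a + b \<subseteq># w'"
      using w' unfolding mono_prod_def by blast
    obtain C1 where C1: "path_min_vertex_cover n C1" "mset_set C1 \<subseteq># a"
      using ab(1) unfolding cover_ideal_path_def mono_ideal_def by blast
    obtain C2 where C2: "path_min_vertex_cover n C2" "mset_set C2 \<subseteq># b"
      using ab(2) unfolding cover_ideal_path_def mono_ideal_def by blast
    have s1: "mset_set C1 + mset_set C2 \<subseteq># w'"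
      using C1(2) C2(2) ab(3) by (meson subset_mset.add_mono subset_mset.order_trans)
    then have "mset_set C1 + mset_set C2 \<subseteq># w" using le by auto
    then have "mset_set C1 + mset_set C2 = w"
      using key C1(1) C2(1) path_min_vertex_cover_def by blast
    then show "w' = w" using s1 le by auto
  qed
qed

end
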